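(* For any $m\in\mathbb{N}$ and $\alpha\in\mathbb{N}^n$ with $2\le|\alpha|\le m$, $$\sum_{(\alpha^1,\dots,\alpha^{m-1})\in\mathbb{N}(\alpha,m)}\frac{\alpha!}{\alpha^1!\cdots\alpha^{m-1}!}=\frac{(m-1)!}{(m-|\alpha|)!\,(|\alpha|-1)!}.$$
   Context: For $\alpha\in\mathbb{N}^n$, $|\alpha|=\sum_j\alpha_j$ and $\alpha!=\alpha_1!\cdots\alpha_n!$. $\mathbb{N}(\alpha,m)$ is the set of all $(\alpha^1,\dots,\alpha^{m-1})\in(\mathbb{N}^n)^{m-1}$ with $\alpha^1+\dots+\alpha^{m-1}=\alpha$ and $1\cdot|\alpha^1|+2\cdot|\alpha^2|+\dots+(m-1)\cdot|\alpha^{m-1}|=m$. *)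

theory Defs
  imports Complex_Main "HOL-Library.FuncSet"
begin

text \<open>Multi-indices in \<open>\<nat>^n\<close> are functions \<open>'n \<Rightarrow> nat\<close> for a finite index type \<open>'n\<close>
  (with \<open>CARD('n) = n\<close>).\<close>

definition mi_abs :: "('n::finite \<Rightarrow> nat) \<Rightarrow> nat" where
  "mi_abs \<beta> = (\<Sum>i\<in>UNIV. \<beta> i)"

definition mi_fact :: "('n::finite \<Rightarrow> nat) \<Rightarrow> nat" where
  "mi_fact \<beta> = (\<Prod>i\<in>UNIV. fact (\<beta> i))"

text \<open>\<open>\<nat>(\<alpha>,m)\<close>: tuples \<open>(\<alpha>^1,\<dots>,\<alpha>^{m-1})\<close>, represented as extensional functions
  on \<open>{1..<m}\<close>.\<close>

definition Nset :: "('n::finite \<Rightarrow> nat) \<Rightarrow> nat \<Rightarrow> (nat \<Rightarrow> ('n \<Rightarrow> nat)) set" where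
  "Nset \<alpha> m = {A \<in> {1..<m} \<rightarrow>\<^sub>E UNIV.
      (\<lambda>i. \<Sum>k\<in>{1..<m}. A k i) = \<alpha> \<and>
      (\<Sum>k\<in>{1..<m}. k * mi_abs (A k)) = m}"

end

theory Submission imports Defs "HOL-Computational_Algebra.Polynomial" begin

definition Tset :: "nat set \<Rightarrow> ('n::finite \<Rightarrow> nat) \<Rightarrow> (nat \<Rightarrow> ('n \<Rightarrow> nat)) set" where
  "Tset K \<alpha> = {A \<in> K \<rightarrow>\<^sub>E UNIV. (\<lambda>i. \<Sum>k\<in>K. A k i) = \<alpha>}"

lemma Tset_finite:
  assumes "finite K"
  shows "finite (Tset K (\<alpha>::'n::finite \<Rightarrow> nat))"
proof -
  have "Tset K \<alpha> \<subseteq> PiE K (\<lambda>_. PiE UNIV (\<lambda>i. {..\<alpha> i}))"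
  proof
    fix A assume A: "A \<in> Tset K \<alpha>"
    have "A k i \<le> \<alpha> i" if "k \<in> K" for k i
    proof -
      have "A k i \<le> (\<Sum>k\<in>K. A k i)" using assms that by (intro member_le_sum) auto
      also have "\<dots> = \<alpha> i" using A unfolding Tset_def by (auto dest: fun_cong[where x=i])
      finally show ?thesis .
    qed
    then show "A \<in> PiE K (\<lambda>_. PiE UNIV (\<lambda>i. {..\<alpha> i}))"
      using A unfolding Tset_def by (auto simp: PiE_UNIV_domain PiE_iff)
  qed
  moreover have "finite (PiE K (\<lambda>_. PiE UNIV (\<lambda>i. {..\<alpha> i})))"
    using assms by (intro finite_PiE) auto
  ultimately show ?thesis by (rule finite_subset)
qed

lemma mi_fact_pos: "mi_fact \<beta> > 0"
  unfolding mi_fact_def by (simp add: prod_pos)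

lemma multi_binom:
  fixes \<alpha> :: "'n::finite \<Rightarrow> nat" and a b :: real
  shows "(\<Sum>\<beta>\<in>PiE UNIV (\<lambda>i. {..\<alpha> i}). real (mi_fact \<alpha>) / (real (mi_fact \<beta>) * real (mi_fact (\<lambda>i. \<alpha> i - \<beta> i)))
           * a ^ mi_abs \<beta> * b ^ mi_abs (\<lambda>i. \<alpha> i - \<beta> i)) = (a + b) ^ mi_abs \<alpha>"
proof -
  define f where "f i j = fact (\<alpha> i) / (fact j * fact (\<alpha> i - j)) * a ^ j * b ^ (\<alpha> i - j)" for i j
  have "(a + b) ^ mi_abs \<alpha> = (\<Prod>i\<in>UNIV. (a + b) ^ \<alpha> i)"
    unfolding mi_abs_def by (simp add: power_sum)
  also have "\<dots> = (\<Prod>i\<in>UNIV. \<Sum>j\<in>{..\<alpha> i}. f i j)"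
    by (intro prod.cong refl) (auto simp: binomial_ring f_def binomial_fact intro!: sum.cong)
  also have "\<dots> = (\<Sum>\<beta>\<in>PiE UNIV (\<lambda>i. {..\<alpha> i}). \<Prod>i\<in>UNIV. f i (\<beta> i))"
    by (rule prod_sum_PiE) auto
  also have "\<dots> = (\<Sum>\<beta>\<in>PiE UNIV (\<lambda>i. {..\<alpha> i}). real (mi_fact \<alpha>) / (real (mi_fact \<beta>) * real (mi_fact (\<lambda>i. \<alpha> i - \<beta> i)))
           * a ^ mi_abs \<beta> * b ^ mi_abs (\<lambda>i. \<alpha> i - \<beta> i))"
    unfolding f_def mi_fact_def mi_abs_def
    by (intro sum.cong refl) (simp add: prod.distrib prod_dividef power_sum of_nat_prod)
  finally show ?thesis ..
qed

lemma Tset_empty: "Tset {} \<alpha> = (if \<alpha> = (\<lambda>i. 0) then {\<lambda>_. undefined} else {})"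
  unfolding Tset_def by auto

lemma mi_abs_zero_iff: "mi_abs (\<alpha>::'n::finite \<Rightarrow> nat) = 0 \<longleftrightarrow> \<alpha> = (\<lambda>i. 0)"
  unfolding mi_abs_def by (auto simp: fun_eq_iff)

lemma mi_abs_0[simp]: "mi_abs (\<lambda>i::'n::finite. 0) = 0"
  unfolding mi_abs_def by simp

lemma lemM:
  fixes y :: "nat \<Rightarrow> real"
  assumes "finite K"
  shows "\<forall>\<alpha>::'n::finite \<Rightarrow> nat. (\<Sum>A\<in>Tset K \<alpha>. real (mi_fact \<alpha>) / (\<Prod>k\<in>K. real (mi_fact (A k))) * (\<Prod>k\<in>K. y k ^ mi_abs (A k)))
      = (\<Sum>k\<in>K. y k) ^ mi_abs \<alpha>"
  using assms
proof (induction K rule: finite_induct)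
  case empty
  show ?case
  proof
    fix \<alpha> :: "'n \<Rightarrow> nat"
    show "(\<Sum>A\<in>Tset {} \<alpha>. real (mi_fact \<alpha>) / (\<Prod>k\<in>{}. real (mi_fact (A k))) * (\<Prod>k\<in>{}. y k ^ mi_abs (A k)))
      = (\<Sum>k\<in>{}. y k) ^ mi_abs \<alpha>"
      by (cases "\<alpha> = (\<lambda>i. 0)") (auto simp: Tset_empty mi_fact_def mi_abs_zero_iff)
  qed
next
  case (insert k K)
  show ?case
  proof
    fix \<alpha> :: "'n \<Rightarrow> nat"
    define S where "S = PiE UNIV (\<lambda>i. {..\<alpha> i})"
    define D where "D \<beta> = (\<lambda>i. \<alpha> i - \<beta> i)" for \<beta> :: "'n \<Rightarrow> nat"
    define g where "g A = real (mi_fact \<alpha>) / (\<Prod>k\<in>insert k K. real (mi_fact (A k))) * (\<Prod>k\<in>insert k K. y k ^ mi_abs (A k))" for A :: "nat \<Rightarrow> 'n \<Rightarrow> nat"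
    define h where "h A = real (mi_fact \<alpha>) / (\<Prod>k\<in>K. real (mi_fact (A k))) * (\<Prod>k\<in>K. y k ^ mi_abs (A k))" for A :: "nat \<Rightarrow> 'n \<Rightarrow> nat"
    have bij: "(\<Sum>p\<in>Sigma S (\<lambda>\<beta>. Tset K (D \<beta>)). g ((snd p)(k := fst p))) = (\<Sum>A\<in>Tset (insert k K) \<alpha>. g A)"
    proof (rule sum.reindex_bij_witness[where j="\<lambda>p. (snd p)(k := fst p)" and i="\<lambda>A. (A k, A(k := undefined))"])
      fix p assume p: "p \<in> Sigma S (\<lambda>\<beta>. Tset K (D \<beta>))"
      then show "(((snd p)(k := fst p)) k, ((snd p)(k := fst p))(k := undefined)) = p"
        using insert.hyps by (cases p) (auto simp: Tset_def PiE_iff extensional_def fun_eq_iff)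
      have "(\<Sum>k'\<in>K. ((snd p)(k := fst p)) k' i) = (\<Sum>k'\<in>K. snd p k' i)" for i
        using insert.hyps by (intro sum.cong) auto
      then show "(snd p)(k := fst p) \<in> Tset (insert k K) \<alpha>"
        using p insert.hyps
        by (cases p) (auto simp: Tset_def S_def D_def PiE_iff extensional_def fun_eq_iff)
    next
      fix A assume A: "A \<in> Tset (insert k K) \<alpha>"
      have s: "\<alpha> i = A k i + (\<Sum>k'\<in>K. A k' i)" for i
        using A insert.hyps unfolding Tset_def by (auto simp: fun_eq_iff)
      have s2: "(\<Sum>k'\<in>K. (A(k := undefined)) k' i) = (\<Sum>k'\<in>K. A k' i)" for i
        using insert.hyps by (intro sum.cong) auto
      show "(A k, A(k := undefined)) \<in> Sigma S (\<lambda>\<beta>. Tset K (D \<beta>))"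
        using A s s2 insert.hyps
        by (auto simp: Tset_def S_def D_def PiE_iff extensional_def fun_eq_iff)
    qed auto
    have finS: "finite S" unfolding S_def by (intro finite_PiE) auto
    have finT: "finite (Tset K (D \<beta>))" for \<beta> using insert.hyps(1) by (rule Tset_finite)
    have key: "g (B(k := \<beta>)) = (real (mi_fact \<alpha>) / (real (mi_fact \<beta>) * real (mi_fact (D \<beta>))) * y k ^ mi_abs \<beta>)
       * (real (mi_fact (D \<beta>)) / (\<Prod>k\<in>K. real (mi_fact (B k))) * (\<Prod>k\<in>K. y k ^ mi_abs (B k)))" for \<beta> B
    proof -
      have e1: "(\<Prod>k'\<in>K. real (mi_fact ((B(k := \<beta>)) k'))) = (\<Prod>k'\<in>K. real (mi_fact (B k')))"
        using insert.hyps by (intro prod.cong) auto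
      have e2: "(\<Prod>k'\<in>K. y k' ^ mi_abs ((B(k := \<beta>)) k')) = (\<Prod>k'\<in>K. y k' ^ mi_abs (B k'))"
        using insert.hyps by (intro prod.cong) auto
      have pos: "real (mi_fact (D \<beta>)) \<noteq> 0" using mi_fact_pos[of "D \<beta>"] by simp
      show ?thesis unfolding g_def using insert.hyps e1 e2 pos by (simp add: field_simps)
    qed
    have "(\<Sum>A\<in>Tset (insert k K) \<alpha>. g A) = (\<Sum>\<beta>\<in>S. \<Sum>B\<in>Tset K (D \<beta>). g (B(k := \<beta>)))"
      unfolding bij[symmetric] using finS finT by (subst sum.Sigma) (auto simp: split_def)
    also have "\<dots> = (\<Sum>\<beta>\<in>S. (real (mi_fact \<alpha>) / (real (mi_fact \<beta>) * real (mi_fact (D \<beta>))) * y k ^ mi_abs \<beta>)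
       * (\<Sum>k\<in>K. y k) ^ mi_abs (D \<beta>))"
      unfolding key sum_distrib_left[symmetric] using insert.IH by simp
    also have "\<dots> = (y k + (\<Sum>k\<in>K. y k)) ^ mi_abs \<alpha>"
      unfolding S_def D_def using multi_binom[of \<alpha> "y k" "\<Sum>k\<in>K. y k"] by (simp add: mult_ac)
    finally show "(\<Sum>A\<in>Tset (insert k K) \<alpha>. real (mi_fact \<alpha>) / (\<Prod>k\<in>insert k K. real (mi_fact (A k))) * (\<Prod>k\<in>insert k K. y k ^ mi_abs (A k)))
      = (\<Sum>k\<in>insert k K. y k) ^ mi_abs \<alpha>" using insert.hyps unfolding g_def by simp
  qed
qed

definition Qp :: "nat \<Rightarrow> real poly" where "Qp L = (\<Sum>k\<in>{1..<L}. monom 1 k)"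

lemma coeffQ: "coeff (Qp L) v = (if 1 \<le> v \<and> v < L then 1 else 0)"
  unfolding Qp_def coeff_sum coeff_monom by (simp add: sum.delta)

lemma coeff0: "1 \<le> p \<Longrightarrow> coeff (Qp L ^ p) 0 = 0"
  by (induction p) (auto simp: coeff_mult_0 coeffQ)

lemma hs: "(\<Sum>i<u. (i choose r)) = u choose Suc r"
  by (induction u) auto

lemma reidx: fixes v :: nat shows "(\<Sum>i\<le>v. (if 1 \<le> i \<and> i < v then f (v - 1 - i) else 0)) = (\<Sum>j<v - 1. f j :: real)"
proof -
  have "(\<Sum>i\<le>v. (if 1 \<le> i \<and> i < v then f (v - 1 - i) else 0)) = (\<Sum>i\<in>{i\<in>{..v}. 1 \<le> i \<and> i < v}. f (v - 1 - i))"
    using sum.inter_filter[OF finite_atMost[of v], of "\<lambda>i. f (v-1-i)" "\<lambda>i. 1 \<le> i \<and> i < v"] by simp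
  also have "{i\<in>{..v}. 1 \<le> i \<and> i < v} = Suc ` {..<v-1}" 
    by (auto simp: image_Suc_lessThan)
  also have "(\<Sum>i\<in>Suc ` {..<v-1}. f (v - 1 - i)) = (\<Sum>i<v-1. f (v - 1 - Suc i))"
    by (subst sum.reindex) auto
  also have "\<dots> = (\<Sum>j<v - 1. f j)" by (rule sum.nat_diff_reindex)
  finally show ?thesis .
qed

lemma coeffP: "1 \<le> p \<Longrightarrow> 1 \<le> v \<Longrightarrow> v < L + p - 1 \<Longrightarrow> coeff (Qp L ^ p) v = real ((v-1) choose (p-1))"
proof (induction p arbitrary: v)
  case 0 then show ?case by simp
next
  case (Suc q)
  show ?case
  proof (cases "q = 0")
    case True then show ?thesis using Suc.prems by (simp add: coeffQ)
  next
    case False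
    have "coeff (Qp L ^ Suc q) v = (\<Sum>i\<le>v. coeff (Qp L) i * coeff (Qp L ^ q) (v - i))"
      by (simp add: coeff_mult)
    also have "\<dots> = (\<Sum>i\<le>v. (if 1 \<le> i \<and> i < v then real ((v - 1 - i) choose (q - 1)) else 0))"
    proof (intro sum.cong refl)
      fix i assume i: "i \<in> {..v}"
      show "coeff (Qp L) i * coeff (Qp L ^ q) (v - i) = (if 1 \<le> i \<and> i < v then real ((v - 1 - i) choose (q - 1)) else 0)"
      proof (cases "1 \<le> i \<and> i < v")
        case True
        show ?thesis
        proof (cases "i < L")
          case True
          have h: "1 \<le> q" "1 \<le> v - i" "v - i < L + q - 1" using Suc.prems \<open>1 \<le> i \<and> i < v\<close> \<open>q \<noteq> 0\<close> by auto
          have "v - i - 1 = v - 1 - i" by simp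
          then show ?thesis using Suc.IH[OF h] \<open>1 \<le> i \<and> i < v\<close> True
            by (simp add: coeffQ)
        next
          case False
          then have "v - 1 - i < q - 1" using Suc.prems \<open>1 \<le> i \<and> i < v\<close> \<open>q \<noteq> 0\<close> by linarith
          then show ?thesis using False by (simp add: coeffQ binomial_eq_0)
        qed
      next
        case False
        then have "i = 0 \<or> i = v" using i by auto
        then show ?thesis using False \<open>q \<noteq> 0\<close> by (auto simp: coeffQ coeff0)
      qed
    qed
    also have "\<dots> = (\<Sum>j<v - 1. real (j choose (q - 1)))" by (rule reidx)
    also have "\<dots> = real ((v - 1) choose q)"
      using hs[where u="v - 1" and r="q - 1"] \<open>q \<noteq> 0\<close> by (simp flip: of_nat_sum)
    finally show ?thesis by simp
  qed
qed

theorem lemma7p3: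
  fixes \<alpha> :: "'n::finite \<Rightarrow> nat" and m :: nat
  assumes "2 \<le> mi_abs \<alpha>" and "mi_abs \<alpha> \<le> m"
  shows "(\<Sum>A\<in>Nset \<alpha> m. real (mi_fact \<alpha>) / (\<Prod>k\<in>{1..<m}. real (mi_fact (A k))))
         = real (fact (m - 1)) / (real (fact (m - mi_abs \<alpha>)) * real (fact (mi_abs \<alpha> - 1)))"
proof -
  define p where "p = mi_abs \<alpha>"
  define K where "K = {1..<m}"
  define T where "T = Tset K \<alpha>"
  define c where "c A = real (mi_fact \<alpha>) / (\<Prod>k\<in>K. real (mi_fact (A k)))" for A :: "nat \<Rightarrow> 'n \<Rightarrow> nat"
  define w where "w A = (\<Sum>k\<in>K. k * mi_abs (A k))" for A :: "nat \<Rightarrow> 'n \<Rightarrow> nat"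
  define Q where "Q = Qp m ^ p"
  define N where "N = max m (max (degree Q) (Max (w ` T)))"
  have finK: "finite K" unfolding K_def by simp
  have finT: "finite T" unfolding T_def using finK by (rule Tset_finite)
  have gen: "(\<Sum>A\<in>T. c A * x ^ w A) = poly Q x" for x :: real
  proof -
    have "(\<Sum>A\<in>T. c A * x ^ w A) = (\<Sum>A\<in>T. c A * (\<Prod>k\<in>K. (x ^ k) ^ mi_abs (A k)))"
      unfolding w_def by (simp add: power_mult[symmetric] power_sum)
    also have "\<dots> = (\<Sum>k\<in>K. x ^ k) ^ p"
      using spec[OF lemM[OF finK, of "\<lambda>k. x ^ k"], of \<alpha>] unfolding T_def c_def p_def by simp
    also have "\<dots> = poly Q x"
      unfolding Q_def Qp_def K_def by (simp add: poly_sum poly_monom)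
    finally show ?thesis .
  qed
  have L: "(\<Sum>A\<in>T. c A * x ^ w A) = (\<Sum>i\<le>N. (\<Sum>A\<in>{A\<in>T. w A = i}. c A) * x ^ i)" for x :: real
  proof -
    have "w ` T \<subseteq> {..N}"
      using finT by (auto simp: N_def intro: Max_ge le_trans[OF _ max.cobounded2] le_trans[OF _ max.cobounded2])
    then have "(\<Sum>A\<in>T. c A * x ^ w A) = (\<Sum>i\<le>N. (\<Sum>A\<in>{A\<in>T. w A = i}. c A * x ^ w A))"
      using sum.group[OF finT finite_atMost, of w N "\<lambda>A. c A * x ^ w A"] by simp
    also have "\<dots> = (\<Sum>i\<le>N. (\<Sum>A\<in>{A\<in>T. w A = i}. c A) * x ^ i)"
      by (intro sum.cong refl) (auto simp: sum_distrib_right)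
    finally show ?thesis .
  qed
  have R: "poly Q x = (\<Sum>i\<le>N. coeff Q i * x ^ i)" for x :: real
  proof -
    have "poly Q x = (\<Sum>i\<le>degree Q. coeff Q i * x ^ i)" by (rule poly_altdef)
    also have "\<dots> = (\<Sum>i\<le>N. coeff Q i * x ^ i)"
      by (rule sum.mono_neutral_left) (auto simp: N_def coeff_eq_0)
    finally show ?thesis .
  qed
  have "\<forall>x::real. (\<Sum>i\<le>N. (\<Sum>A\<in>{A\<in>T. w A = i}. c A) * x ^ i) = (\<Sum>i\<le>N. coeff Q i * x ^ i)"
    using gen L R by metis
  then have "(\<Sum>A\<in>{A\<in>T. w A = m}. c A) = coeff Q m"
    unfolding polyfun_eq_coeffs by (auto simp: N_def)
  also have "\<dots> = real ((m - 1) choose (p - 1))"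
    unfolding Q_def using assms by (intro coeffP) (auto simp: p_def)
  also have "\<dots> = real (fact (m - 1)) / (real (fact (m - p)) * real (fact (p - 1)))"
    using assms by (subst binomial_fact) (auto simp: p_def mult_ac)
  also have "{A\<in>T. w A = m} = Nset \<alpha> m"
    unfolding T_def Tset_def Nset_def w_def K_def by auto
  finally show ?thesis unfolding c_def K_def p_def .
qed

end
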